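(* Let $\mathcal{X}$ be a finite set, $\pi$ a probability mass function on $\mathcal{X}$ with $\pi(x)>0$ for all $x$, and let a group $\mathcal{G}$ act on $\mathcal{X}$, with orbits $\mathcal{O}(x)=\{gx:g\in\mathcal{G}\}$. Let $G$, $M$, $B$ be the Gibbs, Metropolis–Hastings and Barker orbit kernels associated with this same action (defined below). If $M$ does not have a deterministic 2-cycle on any of its orbits, then $\lim_{i\to\infty} M^i = G$. Moreover, $\lim_{i\to\infty}B^i=G$.
   Context: The Gibbs orbit kernel is $G(x,y)=\pi(y)/\pi(\mathcal{O}(x))$ if $y\in\mathcal{O}(x)$ and $0$ otherwise, where $\pi(\mathcal{O}(x))=\sum_{z\in\mathcal{O}(x)}\pi(z)$. The Metropolis–Hastings orbit kernel is $M(x,y)=\frac{1}{|\mathcal{O}(x)|-1}\min\{1,\pi(y)/\pi(x)\}$ for $y\in\mathcal{O}(x)$, $y\neq x$; $M(x,y)=0$ for $y\notin\mathcal{O}(x)$; and $M(x,x)=1-\sum_{y\ne x}M(x,y)$ (so $M(x,x)=1$ if $|\mathcal{O}(x)|=1$). The Barker orbit kernel $B$ is defined identically with $\min\{1,\pi(y)/\pi(x)\}$ replaced by $\pi(y)/(\pi(x)+\pi(y))$. Each of these kernels is block diagonal with respect to the orbits. "$M$ has a deterministic 2-cycle on an orbit" means that the block of $M$ on that orbit equals $\begin{pmatrix}0&1\\1&0\end{pmatrix}$. *)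

theory Defs
  imports "HOL-Analysis.Analysis" "HOL-Algebra.Group_Action"
begin

definition gibbs_orbit_kernel ::
  "('g, 'm) monoid_scheme \<Rightarrow> ('g \<Rightarrow> 'b \<Rightarrow> 'b) \<Rightarrow> ('b \<Rightarrow> real) \<Rightarrow> 'b \<Rightarrow> 'b \<Rightarrow> real" where
  "gibbs_orbit_kernel G \<phi> \<pi> x y =
     (if y \<in> orbit G \<phi> x then \<pi> y / (\<Sum>z\<in>orbit G \<phi> x. \<pi> z) else 0)"

definition orbit_kernel_off ::
  "('g, 'm) monoid_scheme \<Rightarrow> ('g \<Rightarrow> 'b \<Rightarrow> 'b) \<Rightarrow> (real \<Rightarrow> real \<Rightarrow> real) \<Rightarrow> ('b \<Rightarrow> real)
   \<Rightarrow> 'b \<Rightarrow> 'b \<Rightarrow> real" where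
  "orbit_kernel_off G \<phi> acc \<pi> x y =
     (if y \<in> orbit G \<phi> x \<and> y \<noteq> x
      then acc (\<pi> x) (\<pi> y) / (real (card (orbit G \<phi> x)) - 1) else 0)"

definition orbit_kernel ::
  "('g, 'm) monoid_scheme \<Rightarrow> ('g \<Rightarrow> 'b \<Rightarrow> 'b) \<Rightarrow> (real \<Rightarrow> real \<Rightarrow> real) \<Rightarrow> ('b \<Rightarrow> real)
   \<Rightarrow> 'b \<Rightarrow> 'b \<Rightarrow> real" where
  "orbit_kernel G \<phi> acc \<pi> x y =
     (if y = x then 1 - (\<Sum>z\<in>orbit G \<phi> x - {x}. orbit_kernel_off G \<phi> acc \<pi> x z)
      else orbit_kernel_off G \<phi> acc \<pi> x y)"

definition mh_orbit_kernel ::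
  "('g, 'm) monoid_scheme \<Rightarrow> ('g \<Rightarrow> 'b \<Rightarrow> 'b) \<Rightarrow> ('b \<Rightarrow> real) \<Rightarrow> 'b \<Rightarrow> 'b \<Rightarrow> real" where
  "mh_orbit_kernel G \<phi> \<pi> = orbit_kernel G \<phi> (\<lambda>px py. min 1 (py / px)) \<pi>"

definition barker_orbit_kernel ::
  "('g, 'm) monoid_scheme \<Rightarrow> ('g \<Rightarrow> 'b \<Rightarrow> 'b) \<Rightarrow> ('b \<Rightarrow> real) \<Rightarrow> 'b \<Rightarrow> 'b \<Rightarrow> real" where
  "barker_orbit_kernel G \<phi> \<pi> = orbit_kernel G \<phi> (\<lambda>px py. py / (px + py)) \<pi>"

fun kernel_pow :: "'b set \<Rightarrow> ('b \<Rightarrow> 'b \<Rightarrow> real) \<Rightarrow> nat \<Rightarrow> 'b \<Rightarrow> 'b \<Rightarrow> real" where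
  "kernel_pow X K 0 = (\<lambda>x y. if x = y then 1 else 0)"
| "kernel_pow X K (Suc n) = (\<lambda>x y. \<Sum>z\<in>X. kernel_pow X K n x z * K z y)"

definition det_2cycle_on :: "('b \<Rightarrow> 'b \<Rightarrow> real) \<Rightarrow> 'b set \<Rightarrow> bool" where
  "det_2cycle_on K Orb \<longleftrightarrow> card Orb = 2 \<and>
     (\<forall>x\<in>Orb. \<forall>y\<in>Orb. K x y = (if x = y then 0 else 1))"

end

theory Submission
  imports Defs
begin


lemma kp_nn:
  assumes "finite Ob" "\<forall>z\<in>Ob. \<forall>y\<in>Ob. P z y \<ge> 0"
  shows "z \<in> Ob \<Longrightarrow> y \<in> Ob \<Longrightarrow> kernel_pow Ob P i z y \<ge> 0"
proof (induction i arbitrary: y)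
  case (Suc i) then show ?case using assms by (auto intro!: sum_nonneg)
qed simp

lemma kp_row:
  assumes "finite Ob" "\<forall>z\<in>Ob. (\<Sum>y\<in>Ob. P z y) = 1"
  shows "z \<in> Ob \<Longrightarrow> (\<Sum>y\<in>Ob. kernel_pow Ob P i z y) = 1"
proof (induction i)
  case 0 then show ?case using assms by simp
next
  case (Suc i)
  have "(\<Sum>y\<in>Ob. kernel_pow Ob P (Suc i) z y) = (\<Sum>y\<in>Ob. \<Sum>w\<in>Ob. kernel_pow Ob P i z w * P w y)"
    by simp
  also have "\<dots> = (\<Sum>w\<in>Ob. \<Sum>y\<in>Ob. kernel_pow Ob P i z w * P w y)" by (rule sum.swap)
  also have "\<dots> = (\<Sum>w\<in>Ob. kernel_pow Ob P i z w * (\<Sum>y\<in>Ob. P w y))"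
    by (simp add: sum_distrib_left)
  also have "\<dots> = (\<Sum>w\<in>Ob. kernel_pow Ob P i z w)" using assms by simp
  finally show ?case using Suc by simp
qed

lemma kp_stat:
  assumes "finite Ob" "\<forall>y\<in>Ob. (\<Sum>z\<in>Ob. \<mu> z * P z y) = \<mu> y"
  shows "y \<in> Ob \<Longrightarrow> (\<Sum>z\<in>Ob. \<mu> z * kernel_pow Ob P i z y) = \<mu> y"
proof (induction i arbitrary: y)
  case 0 
  have "(\<Sum>z\<in>Ob. \<mu> z * kernel_pow Ob P 0 z y) = (\<Sum>z\<in>Ob. if z = y then \<mu> z else 0)"
    by (rule sum.cong) auto
  then show ?case using assms 0 by simp
next
  case (Suc i)
  have "(\<Sum>z\<in>Ob. \<mu> z * kernel_pow Ob P (Suc i) z y) = (\<Sum>z\<in>Ob. \<Sum>w\<in>Ob. \<mu> z * kernel_pow Ob P i z w * P w y)"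
    by (simp add: sum_distrib_left mult.assoc)
  also have "\<dots> = (\<Sum>w\<in>Ob. \<Sum>z\<in>Ob. \<mu> z * kernel_pow Ob P i z w * P w y)" by (rule sum.swap)
  also have "\<dots> = (\<Sum>w\<in>Ob. (\<Sum>z\<in>Ob. \<mu> z * kernel_pow Ob P i z w) * P w y)"
    by (simp add: sum_distrib_right)
  also have "\<dots> = (\<Sum>w\<in>Ob. \<mu> w * P w y)" using Suc by simp
  finally show ?case using Suc assms by simp
qed

lemma kp_add:
  assumes "finite Ob"
  shows "y \<in> Ob \<Longrightarrow> kernel_pow Ob P (i + m) x y = (\<Sum>z\<in>Ob. kernel_pow Ob P i x z * kernel_pow Ob P m z y)"
proof (induction m arbitrary: y)
  case 0 
  have "(\<Sum>z\<in>Ob. kernel_pow Ob P i x z * kernel_pow Ob P 0 z y) = (\<Sum>z\<in>Ob. if z = y then kernel_pow Ob P i x z else 0)"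
    by (rule sum.cong) auto
  then show ?case using assms 0 by simp
next
  case (Suc m)
  have "kernel_pow Ob P (i + Suc m) x y = (\<Sum>w\<in>Ob. kernel_pow Ob P (i+m) x w * P w y)" by simp
  also have "\<dots> = (\<Sum>w\<in>Ob. (\<Sum>z\<in>Ob. kernel_pow Ob P i x z * kernel_pow Ob P m z w) * P w y)"
    using Suc by simp
  also have "\<dots> = (\<Sum>w\<in>Ob. \<Sum>z\<in>Ob. kernel_pow Ob P i x z * (kernel_pow Ob P m z w * P w y))"
    by (simp add: sum_distrib_right mult.assoc)
  also have "\<dots> = (\<Sum>z\<in>Ob. \<Sum>w\<in>Ob. kernel_pow Ob P i x z * (kernel_pow Ob P m z w * P w y))" by (rule sum.swap)
  also have "\<dots> = (\<Sum>z\<in>Ob. kernel_pow Ob P i x z * kernel_pow Ob P (Suc m) z y)"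
    by (simp add: sum_distrib_left)
  finally show ?case .
qed

lemma kp1: assumes "finite Ob" "z \<in> Ob" shows "kernel_pow Ob P 1 z w = P z w"
proof -
  have "kernel_pow Ob P 1 z w = (\<Sum>za\<in>Ob. (if z = za then 1 else 0) * P za w)" by simp
  also have "\<dots> = (\<Sum>za\<in>Ob. if z = za then P za w else 0)" by (rule sum.cong) auto
  finally show ?thesis using assms by simp
qed

lemma kp2: assumes "finite Ob" "z \<in> Ob" shows "kernel_pow Ob P 2 z y = (\<Sum>w\<in>Ob. P z w * P w y)"
proof -
  have e: "kernel_pow Ob P (Suc 1) = (\<lambda>x y. \<Sum>w\<in>Ob. kernel_pow Ob P 1 x w * P w y)" by (rule kernel_pow.simps(2))
  have "kernel_pow Ob P 2 z y = (\<Sum>w\<in>Ob. kernel_pow Ob P 1 z w * P w y)" by (subst Suc_1[symmetric], subst kernel_pow.simps(2), rule refl)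
  also have "\<dots> = (\<Sum>w\<in>Ob. P z w * P w y)" using kp1[OF assms] by simp
  finally show ?thesis .
qed



lemma div_tendsto: assumes "(m::nat) > 0" shows "filterlim (\<lambda>i. i div m) sequentially sequentially"
  unfolding filterlim_at_top eventually_sequentially
proof (intro allI exI allI impI)
  fix Z n assume "Z * m \<le> n"
  then have "(Z*m) div m \<le> n div m" by (rule div_le_mono)
  then show "Z \<le> n div m" using assms by simp
qed

lemma kp_conv:
  fixes Ob :: "'b set" and P :: "'b \<Rightarrow> 'b \<Rightarrow> real"
  assumes fin: "finite Ob" and x: "x \<in> Ob"
    and Pnn: "\<forall>z\<in>Ob. \<forall>y\<in>Ob. P z y \<ge> 0"
    and Prow: "\<forall>z\<in>Ob. (\<Sum>y\<in>Ob. P z y) = 1"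
    and musum: "(\<Sum>y\<in>Ob. \<mu> y) = 1"
    and mustat: "\<forall>y\<in>Ob. (\<Sum>z\<in>Ob. \<mu> z * P z y) = \<mu> y"
    and dpos: "\<delta> > 0" and mpos: "m > 0"
    and mino: "\<forall>z\<in>Ob. \<forall>y\<in>Ob. kernel_pow Ob P m z y \<ge> \<delta>"
    and y: "y \<in> Ob"
  shows "(\<lambda>i. kernel_pow Ob P i x y) \<longlonglongrightarrow> \<mu> y"
proof -
  define Q where "Q = kernel_pow Ob P m"
  define d where "d i w = kernel_pow Ob P i x w - \<mu> w" for i w
  define N where "N i = (\<Sum>w\<in>Ob. \<bar>d i w\<bar>)" for i
  define C where "C = 1 + (\<Sum>w\<in>Ob. \<bar>\<mu> w\<bar>)"
  define c where "c = 1 - real (card Ob) * \<delta>"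
  have nn: "\<And>i z w. z \<in> Ob \<Longrightarrow> w \<in> Ob \<Longrightarrow> kernel_pow Ob P i z w \<ge> 0"
    using kp_nn[OF fin Pnn] by blast
  have row: "\<And>i z. z \<in> Ob \<Longrightarrow> (\<Sum>w\<in>Ob. kernel_pow Ob P i z w) = 1"
    using kp_row[OF fin Prow] by blast
  have stat: "\<And>i w. w \<in> Ob \<Longrightarrow> (\<Sum>z\<in>Ob. \<mu> z * kernel_pow Ob P i z w) = \<mu> w"
    using kp_stat[OF fin mustat] by blast
  have NC: "N i \<le> C" for i
  proof -
    have "N i \<le> (\<Sum>w\<in>Ob. kernel_pow Ob P i x w + \<bar>\<mu> w\<bar>)"
      unfolding N_def d_def
    proof (rule sum_mono)
      fix w assume "w \<in> Ob"
      then have "kernel_pow Ob P i x w \<ge> 0" using nn x by blast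
      then show "\<bar>kernel_pow Ob P i x w - \<mu> w\<bar> \<le> kernel_pow Ob P i x w + \<bar>\<mu> w\<bar>" by (auto simp: abs_if)
    qed
    also have "\<dots> = C" unfolding C_def sum.distrib row[OF x] by simp
    finally show ?thesis .
  qed
  have dsum: "(\<Sum>w\<in>Ob. d i w) = 0" for i
    unfolding d_def sum_subtractf row[OF x] musum by simp
  have step: "N (i + m) \<le> c * N i" for i
  proof -
    have eq: "d (i+m) w = (\<Sum>z\<in>Ob. d i z * (Q z w - \<delta>))" if w: "w \<in> Ob" for w
    proof -
      have "d (i+m) w = (\<Sum>z\<in>Ob. kernel_pow Ob P i x z * Q z w) - (\<Sum>z\<in>Ob. \<mu> z * Q z w)"
        unfolding d_def Q_def kp_add[OF fin w] stat[OF w] ..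
      also have "\<dots> = (\<Sum>z\<in>Ob. d i z * Q z w)"
        unfolding d_def sum_subtractf[symmetric] by (simp add: algebra_simps)
      also have "\<dots> = (\<Sum>z\<in>Ob. d i z * Q z w) - \<delta> * (\<Sum>z\<in>Ob. d i z)"
        using dsum by simp
      also have "\<dots> = (\<Sum>z\<in>Ob. d i z * (Q z w - \<delta>))"
        by (simp add: sum_distrib_left sum_subtractf[symmetric] algebra_simps)
      finally show ?thesis .
    qed
    have "N (i+m) \<le> (\<Sum>w\<in>Ob. \<Sum>z\<in>Ob. \<bar>d i z\<bar> * (Q z w - \<delta>))"
      unfolding N_def
    proof (rule sum_mono)
      fix w assume w: "w \<in> Ob"
      have "\<bar>d (i+m) w\<bar> \<le> (\<Sum>z\<in>Ob. \<bar>d i z * (Q z w - \<delta>)\<bar>)"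
        unfolding eq[OF w] by (rule sum_abs)
      also have "\<dots> = (\<Sum>z\<in>Ob. \<bar>d i z\<bar> * (Q z w - \<delta>))"
        by (rule sum.cong) (use mino w in \<open>auto simp: abs_mult Q_def\<close>)
      finally show "\<bar>d (i+m) w\<bar> \<le> (\<Sum>z\<in>Ob. \<bar>d i z\<bar> * (Q z w - \<delta>))" .
    qed
    also have "\<dots> = (\<Sum>z\<in>Ob. \<Sum>w\<in>Ob. \<bar>d i z\<bar> * (Q z w - \<delta>))" by (rule sum.swap)
    also have "\<dots> = (\<Sum>z\<in>Ob. \<bar>d i z\<bar> * ((\<Sum>w\<in>Ob. Q z w) - real (card Ob) * \<delta>))"
    proof (rule sum.cong)
      fix z assume "z \<in> Ob"
      have "(\<Sum>w\<in>Ob. \<bar>d i z\<bar> * (Q z w - \<delta>)) = \<bar>d i z\<bar> * (\<Sum>w\<in>Ob. (Q z w - \<delta>))"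
        by (rule sum_distrib_left[symmetric])
      also have "(\<Sum>w\<in>Ob. (Q z w - \<delta>)) = (\<Sum>w\<in>Ob. Q z w) - real (card Ob) * \<delta>"
        by (simp add: sum_subtractf)
      finally show "(\<Sum>w\<in>Ob. \<bar>d i z\<bar> * (Q z w - \<delta>)) = \<bar>d i z\<bar> * ((\<Sum>w\<in>Ob. Q z w) - real (card Ob) * \<delta>)" .
    qed simp
    also have "\<dots> = (\<Sum>z\<in>Ob. \<bar>d i z\<bar> * c)"
      by (rule sum.cong) (auto simp: Q_def row c_def)
    also have "\<dots> = c * N i" unfolding N_def by (simp add: sum_distrib_left mult.commute)
    finally show ?thesis .
  qed
  have c0: "c \<ge> 0"
  proof -
    have "(\<Sum>w\<in>Ob. \<delta>) \<le> (\<Sum>w\<in>Ob. Q x w)" by (rule sum_mono) (use mino x in \<open>auto simp: Q_def\<close>)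
    then show ?thesis unfolding c_def Q_def row[OF x] by simp
  qed
  have c1: "c < 1"
  proof -
    have "card Ob > 0" using fin x by (auto simp: card_gt_0_iff)
    then show ?thesis unfolding c_def using dpos by simp
  qed
  have Nk: "N (k * m + r) \<le> c ^ k * C" for k r
  proof (induction k)
    case 0 then show ?case using NC by simp
  next
    case (Suc k)
    have "N (Suc k * m + r) = N ((k * m + r) + m)" by (simp add: algebra_simps)
    also have "\<dots> \<le> c * N (k*m + r)" by (rule step)
    also have "\<dots> \<le> c * (c^k * C)" using Suc c0 by (rule mult_left_mono)
    finally show ?case by simp
  qed
  have bound: "norm (kernel_pow Ob P i x y - \<mu> y) \<le> c ^ (i div m) * C" for i
  proof -
    have "norm (kernel_pow Ob P i x y - \<mu> y) = \<bar>d i y\<bar>" by (simp add: d_def)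
    also have "\<dots> \<le> N i" unfolding N_def by (rule member_le_sum) (use fin y in auto)
    also have "\<dots> \<le> c ^ (i div m) * C" using Nk[of "i div m" "i mod m"] by simp
    finally show ?thesis .
  qed
  have "(\<lambda>k. c ^ k) \<longlonglongrightarrow> 0" using c0 c1 by (intro LIMSEQ_power_zero) simp
  then have "(\<lambda>i. c ^ (i div m)) \<longlonglongrightarrow> 0" by (rule filterlim_compose[OF _ div_tendsto[OF mpos]])
  then have "(\<lambda>i. c ^ (i div m) * C) \<longlonglongrightarrow> 0" by (rule tendsto_mult_left_zero)
  then have "(\<lambda>i. kernel_pow Ob P i x y - \<mu> y) \<longlonglongrightarrow> 0"
    by (rule Lim_null_comparison[rotated]) (use bound in auto)
  then show ?thesis by (rule LIM_zero_cancel)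
qed



lemma orb_sub: "group_action G X \<phi> \<Longrightarrow> x \<in> X \<Longrightarrow> orbit G \<phi> x \<subseteq> X"
  unfolding orbit_def using group_action.element_image by fastforce

lemma orb_eq: assumes ga: "group_action G X \<phi>" and x: "x \<in> X" and z: "z \<in> orbit G \<phi> x"
  shows "orbit G \<phi> z = orbit G \<phi> x"
proof -
  have zX: "z \<in> X" using orb_sub[OF ga x] z by blast
  have xz: "x \<in> orbit G \<phi> z" using group_action.orbit_sym[OF ga x zX z] .
  show ?thesis
  proof
    show "orbit G \<phi> z \<subseteq> orbit G \<phi> x"
      using group_action.orbit_trans[OF ga x zX] z orb_sub[OF ga zX] by blast
    show "orbit G \<phi> x \<subseteq> orbit G \<phi> z"
      using group_action.orbit_trans[OF ga zX x] xz orb_sub[OF ga x] by blast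
  qed
qed

lemma orb_self: "group_action G X \<phi> \<Longrightarrow> x \<in> X \<Longrightarrow> x \<in> orbit G \<phi> x"
  by (rule group_action.orbit_refl)

locale okern =
  fixes G :: "('g, 'm) monoid_scheme" and \<phi> :: "'g \<Rightarrow> 'b \<Rightarrow> 'b" and X :: "'b set"
    and \<pi> :: "'b \<Rightarrow> real" and acc :: "real \<Rightarrow> real \<Rightarrow> real"
  assumes ga: "group_action G X \<phi>" and fin: "finite X" and pos: "\<forall>x\<in>X. \<pi> x > 0"
    and acc_pos: "\<And>a b. a > 0 \<Longrightarrow> b > 0 \<Longrightarrow> acc a b > 0"
    and acc_le: "\<And>a b. a > 0 \<Longrightarrow> b > 0 \<Longrightarrow> acc a b \<le> 1"
    and acc_rev: "\<And>a b. a > 0 \<Longrightarrow> b > 0 \<Longrightarrow> a * acc a b = b * acc b a"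
begin

abbreviation "P \<equiv> orbit_kernel G \<phi> acc \<pi>"
abbreviation "Orb x \<equiv> orbit G \<phi> x"

lemma finO: "x \<in> X \<Longrightarrow> finite (Orb x)"
  using orb_sub[OF ga] fin finite_subset by blast

lemma inX: "x \<in> X \<Longrightarrow> z \<in> Orb x \<Longrightarrow> z \<in> X"
  using orb_sub[OF ga] by blast

lemma P_off: assumes x: "x \<in> X" and z: "z \<in> Orb x" and y: "y \<in> Orb x" and yz: "y \<noteq> z"
  shows "P z y = acc (\<pi> z) (\<pi> y) / (real (card (Orb x)) - 1)"
  using yz y orb_eq[OF ga x z]
  by (simp add: orbit_kernel_def orbit_kernel_off_def)

lemma card2: assumes x: "x \<in> X" and z: "z \<in> Orb x" and y: "y \<in> Orb x" and yz: "y \<noteq> z"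
  shows "card (Orb x) \<ge> 2"
proof -
  have "{z, y} \<subseteq> Orb x" using z y by auto
  then have "card {z, y} \<le> card (Orb x)" by (rule card_mono[OF finO[OF x]])
  then show ?thesis using yz by simp
qed

lemma P_off_pos: assumes x: "x \<in> X" and z: "z \<in> Orb x" and y: "y \<in> Orb x" and yz: "y \<noteq> z"
  shows "P z y > 0"
proof -
  have "real (card (Orb x)) - 1 > 0" using card2[OF assms] by simp
  moreover have "acc (\<pi> z) (\<pi> y) > 0" using acc_pos pos inX[OF x] z y by blast
  ultimately show ?thesis unfolding P_off[OF assms] by simp
qed

lemma P_diag: assumes x: "x \<in> X" and z: "z \<in> Orb x"
  shows "P z z = 1 - (\<Sum>y\<in>Orb x - {z}. P z y)"
proof -
  have "(\<Sum>y\<in>Orb x - {z}. P z y) = (\<Sum>y\<in>Orb x - {z}. orbit_kernel_off G \<phi> acc \<pi> z y)"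
    by (rule sum.cong) (auto simp: orbit_kernel_def)
  then show ?thesis using orb_eq[OF ga x z] by (simp add: orbit_kernel_def)
qed

lemma P_row: assumes x: "x \<in> X" and z: "z \<in> Orb x"
  shows "(\<Sum>y\<in>Orb x. P z y) = 1"
  using sum.remove[OF finO[OF x] z, of "P z"] P_diag[OF x z] by simp

lemma P_out: assumes x: "x \<in> X" and z: "z \<in> Orb x" and y: "y \<notin> Orb x"
  shows "P z y = 0"
proof -
  have "y \<noteq> z" using y z by blast
  then show ?thesis using y orb_eq[OF ga x z]
    by (simp add: orbit_kernel_def orbit_kernel_off_def)
qed

lemma P_nn: assumes x: "x \<in> X" and z: "z \<in> Orb x" and y: "y \<in> Orb x"
  shows "P z y \<ge> 0"
proof (cases "y = z")
  case False then show ?thesis using P_off_pos[OF x z y] by simp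
next
  case True
  have "(\<Sum>w\<in>Orb x - {z}. P z w) \<le> (\<Sum>w\<in>Orb x - {z}. 1 / (real (card (Orb x)) - 1))"
  proof (rule sum_mono)
    fix w assume w: "w \<in> Orb x - {z}"
    then have "card (Orb x) \<ge> 2" using card2[OF x z] by blast
    then have d: "real (card (Orb x)) - 1 > 0" by simp
    have "acc (\<pi> z) (\<pi> w) \<le> 1" using acc_le pos inX[OF x] z w by blast
    then show "P z w \<le> 1 / (real (card (Orb x)) - 1)"
    proof -
      have "P z w = acc (\<pi> z) (\<pi> w) / (real (card (Orb x)) - 1)"
        using w by (intro P_off[OF x z]) auto
      then show ?thesis using divide_right_mono[OF \<open>acc (\<pi> z) (\<pi> w) \<le> 1\<close>, of "real (card (Orb x)) - 1"] d by simp
    qed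
  qed
  also have "\<dots> = real (card (Orb x - {z})) / (real (card (Orb x)) - 1)" by simp
  also have "\<dots> \<le> 1"
  proof -
    have c: "card (Orb x - {z}) = card (Orb x) - 1" using z finO[OF x] by simp
    have "card (Orb x) \<ge> 1" using z finO[OF x] by (metis One_nat_def Suc_leI card_gt_0_iff empty_iff)
    then show ?thesis unfolding c by (simp add: of_nat_diff)
  qed
  finally show ?thesis using True P_diag[OF x z] by simp
qed

lemma P_rev: assumes x: "x \<in> X" and z: "z \<in> Orb x" and y: "y \<in> Orb x"
  shows "\<pi> z * P z y = \<pi> y * P y z"
proof (cases "y = z")
  case False
  have "\<pi> z * acc (\<pi> z) (\<pi> y) = \<pi> y * acc (\<pi> y) (\<pi> z)" using acc_rev pos inX[OF x] z y by blast
  then show ?thesis unfolding P_off[OF x z y False] P_off[OF x y z False[symmetric]] by simp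
qed simp


lemma P2_pos: assumes x: "x \<in> X" and z: "z \<in> Orb x" and y: "y \<in> Orb x"
    and H: "card (Orb x) = 2 \<Longrightarrow> \<exists>u\<in>Orb x. P u u > 0"
  shows "kernel_pow (Orb x) P 2 z y > 0"
proof -
  have ex: "\<exists>w\<in>Orb x. P z w * P w y > 0"
  proof (cases "card (Orb x) = 1")
    case True
    then obtain a where a: "Orb x = {a}" by (auto simp: card_Suc_eq)
    then have "z = a" "y = a" using z y by auto
    moreover have "P a a = 1" using P_diag[OF x, of a] a by simp
    ultimately show ?thesis using a by simp
  next
    case False
    have ge2: "card (Orb x) \<ge> 2"
      using False z finO[OF x] by (metis One_nat_def Suc_1 Suc_leI card_gt_0_iff empty_iff le_neq_implies_less less_Suc_eq_le)
    show ?thesis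
    proof (cases "z = y")
      case True
      have "card (Orb x - {z}) > 0" using ge2 z finO[OF x] by simp
      then obtain w where w: "w \<in> Orb x" "w \<noteq> z" by (metis card_gt_0_iff Diff_iff all_not_in_conv singletonI)
      then show ?thesis using P_off_pos[OF x z w(1) w(2)] P_off_pos[OF x w(1) z w(2)[symmetric]] True
        by (intro bexI[of _ w]) auto
    next
      case zy: False
      show ?thesis
      proof (cases "card (Orb x) = 2")
        case False
        then have "card (Orb x) > card {z, y}" using ge2 zy by simp
        then have "\<not> Orb x \<subseteq> {z, y}" using card_mono[of "{z,y}" "Orb x"] by fastforce
        then obtain w where w: "w \<in> Orb x" "w \<noteq> z" "w \<noteq> y" by auto
        then show ?thesis using P_off_pos[OF x z w(1) w(2)] P_off_pos[OF x w(1) y] zy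
          by (intro bexI[of _ w]) auto
      next
        case True
        then obtain u where u: "u \<in> Orb x" "P u u > 0" using H by blast
        have "{z, y} \<subseteq> Orb x" using z y by auto
        moreover have "card {z, y} = card (Orb x)" using True zy by simp
        ultimately have "Orb x = {z, y}" using finO[OF x] by (metis card_subset_eq)
        then have "u = z \<or> u = y" using u by auto
        then show ?thesis
        proof
          assume "u = z" then show ?thesis using u P_off_pos[OF x z y] zy z by (intro bexI[of _ z]) auto
        next
          assume "u = y" then show ?thesis using u P_off_pos[OF x z y] zy y by (intro bexI[of _ y]) auto
        qed
      qed
    qed
  qed
  then obtain w where w: "w \<in> Orb x" "P z w * P w y > 0" by blast
  have "P z w * P w y \<le> (\<Sum>v\<in>Orb x. P z v * P v y)"
    by (rule member_le_sum) (use w P_nn[OF x] z y finO[OF x] in auto)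
  then show ?thesis unfolding kp2[OF finO[OF x] z] using w by simp
qed

lemma block: assumes x: "x \<in> X"
  shows "y \<in> X \<Longrightarrow> kernel_pow X P i x y = (if y \<in> Orb x then kernel_pow (Orb x) P i x y else 0)"
proof (induction i arbitrary: y)
  case 0 then show ?case using orb_self[OF ga x] by auto
next
  case (Suc i)
  have sub: "Orb x \<subseteq> X" using orb_sub[OF ga x] .
  have "kernel_pow X P (Suc i) x y = (\<Sum>w\<in>X. (if w \<in> Orb x then kernel_pow (Orb x) P i x w else 0) * P w y)"
    using Suc by simp
  also have "\<dots> = (\<Sum>w\<in>X. if w \<in> Orb x then kernel_pow (Orb x) P i x w * P w y else 0)"
    by (rule sum.cong) auto
  also have "\<dots> = (\<Sum>w\<in>Orb x. kernel_pow (Orb x) P i x w * P w y)"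
    using sum.inter_restrict[OF fin, of "\<lambda>w. kernel_pow (Orb x) P i x w * P w y" "Orb x"] sub
    by (simp add: Int_absorb1)
  also have "\<dots> = (if y \<in> Orb x then kernel_pow (Orb x) P (Suc i) x y else 0)"
    using P_out[OF x] by auto
  finally show ?case .
qed

lemma conv: assumes H: "\<forall>x\<in>X. card (Orb x) = 2 \<longrightarrow> (\<exists>u\<in>Orb x. P u u > 0)"
    and x: "x \<in> X" and y: "y \<in> X"
  shows "(\<lambda>i. kernel_pow X P i x y) \<longlonglongrightarrow> gibbs_orbit_kernel G \<phi> \<pi> x y"
proof (cases "y \<in> Orb x")
  case False
  then show ?thesis using block[OF x y] by (simp add: gibbs_orbit_kernel_def)
next
  case True
  define S where "S = (\<Sum>z\<in>Orb x. \<pi> z)"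
  have S: "S > 0" unfolding S_def
    using orb_self[OF ga x] finO[OF x] pos inX[OF x] by (intro sum_pos) auto
  define \<mu> where "\<mu> z = \<pi> z / S" for z
  define \<delta> where "\<delta> = Min ((\<lambda>(z, w). kernel_pow (Orb x) P 2 z w) ` (Orb x \<times> Orb x))"
  have fs: "finite ((\<lambda>(z, w). kernel_pow (Orb x) P 2 z w) ` (Orb x \<times> Orb x))"
    using finO[OF x] by simp
  have ne: "(\<lambda>(z, w). kernel_pow (Orb x) P 2 z w) ` (Orb x \<times> Orb x) \<noteq> {}"
    using orb_self[OF ga x] by blast
  have p2: "\<And>z w. z \<in> Orb x \<Longrightarrow> w \<in> Orb x \<Longrightarrow> kernel_pow (Orb x) P 2 z w > 0"
    using P2_pos[OF x] H x by blast
  have dpos: "\<delta> > 0" unfolding \<delta>_def Min_gr_iff[OF fs ne] using p2 by auto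
  have mino: "\<forall>z\<in>Orb x. \<forall>w\<in>Orb x. kernel_pow (Orb x) P 2 z w \<ge> \<delta>"
    unfolding \<delta>_def using Min_le[OF fs] by fastforce
  have musum: "(\<Sum>z\<in>Orb x. \<mu> z) = 1" unfolding \<mu>_def using S
    by (simp add: sum_divide_distrib[symmetric] S_def)
  have mustat: "\<forall>w\<in>Orb x. (\<Sum>z\<in>Orb x. \<mu> z * P z w) = \<mu> w"
  proof
    fix w assume w: "w \<in> Orb x"
    have "(\<Sum>z\<in>Orb x. \<mu> z * P z w) = (\<Sum>z\<in>Orb x. \<pi> w * P w z) / S"
      unfolding \<mu>_def sum_divide_distrib
      by (rule sum.cong) (use P_rev[OF x _ w] in auto)
    also have "\<dots> = \<pi> w / S" using P_row[OF x w] by (simp add: sum_distrib_left[symmetric])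
    finally show "(\<Sum>z\<in>Orb x. \<mu> z * P z w) = \<mu> w" unfolding \<mu>_def .
  qed
  have "(\<lambda>i. kernel_pow (Orb x) P i x y) \<longlonglongrightarrow> \<mu> y"
    by (rule kp_conv[OF finO[OF x] orb_self[OF ga x] _ _ musum mustat dpos _ mino True])
       (use P_nn[OF x] P_row[OF x] in auto)
  moreover have "\<mu> y = gibbs_orbit_kernel G \<phi> \<pi> x y"
    using True by (simp add: gibbs_orbit_kernel_def \<mu>_def S_def)
  ultimately show ?thesis using block[OF x y] True by simp
qed

end


lemma two_elems: assumes "finite A" "card A = 2" "a \<in> A" "b \<in> A" "a \<noteq> b" shows "A = {a, b}"
proof -
  have "{a, b} \<subseteq> A" using assms by auto
  moreover have "card {a, b} = card A" using assms by simp
  ultimately show ?thesis using assms(1) by (metis card_subset_eq)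
qed

lemma other_elem: assumes "finite A" "card A = 2" "a \<in> A" obtains b where "b \<in> A" "b \<noteq> a"
proof -
  have "card (A - {a}) = 1" using assms by simp
  then obtain b where "A - {a} = {b}" by (auto simp: card_Suc_eq)
  then show ?thesis using that by auto
qed

theorem proposition2p3:
  fixes G :: "('g, 'm) monoid_scheme" (structure)
    and \<phi> :: "'g \<Rightarrow> 'b \<Rightarrow> 'b" and X :: "'b set" and \<pi> :: "'b \<Rightarrow> real"
  assumes "group G"
    and "group_action G X \<phi>"
    and "finite X"
    and "\<forall>x\<in>X. \<pi> x > 0"
    and "(\<Sum>x\<in>X. \<pi> x) = 1"
  shows "((\<forall>x\<in>X. \<not> det_2cycle_on (mh_orbit_kernel G \<phi> \<pi>) (orbit G \<phi> x)) \<longrightarrow>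
           (\<forall>x\<in>X. \<forall>y\<in>X. (\<lambda>i. kernel_pow X (mh_orbit_kernel G \<phi> \<pi>) i x y)
              \<longlonglongrightarrow> gibbs_orbit_kernel G \<phi> \<pi> x y))
       \<and> (\<forall>x\<in>X. \<forall>y\<in>X. (\<lambda>i. kernel_pow X (barker_orbit_kernel G \<phi> \<pi>) i x y)
              \<longlonglongrightarrow> gibbs_orbit_kernel G \<phi> \<pi> x y)"
proof
  interpret M: okern G \<phi> X \<pi> "\<lambda>px py. min 1 (py / px)"
  proof (rule okern.intro)
    show "\<And>a b::real. 0 < a \<Longrightarrow> 0 < b \<Longrightarrow> 0 < min 1 (b / a)" by simp
    show "\<And>a b::real. 0 < a \<Longrightarrow> 0 < b \<Longrightarrow> min 1 (b / a) \<le> 1" by simp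
    show "\<And>a b::real. 0 < a \<Longrightarrow> 0 < b \<Longrightarrow> a * min 1 (b / a) = b * min 1 (a / b)"
      by (auto simp: min_def field_simps)
  qed (use assms in auto)
  show "(\<forall>x\<in>X. \<not> det_2cycle_on (mh_orbit_kernel G \<phi> \<pi>) (orbit G \<phi> x)) \<longrightarrow>
           (\<forall>x\<in>X. \<forall>y\<in>X. (\<lambda>i. kernel_pow X (mh_orbit_kernel G \<phi> \<pi>) i x y)
              \<longlonglongrightarrow> gibbs_orbit_kernel G \<phi> \<pi> x y)"
  proof (intro impI ballI)
    fix x y assume nd: "\<forall>x\<in>X. \<not> det_2cycle_on (mh_orbit_kernel G \<phi> \<pi>) (orbit G \<phi> x)"
      and x: "x \<in> X" and y: "y \<in> X"
    have H: "\<forall>x\<in>X. card (M.Orb x) = 2 \<longrightarrow> (\<exists>u\<in>M.Orb x. M.P u u > 0)"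
    proof (intro ballI impI)
      fix x assume x: "x \<in> X" and c2: "card (M.Orb x) = 2"
      show "\<exists>u\<in>M.Orb x. M.P u u > 0"
      proof (rule ccontr)
        assume "\<not> ?thesis"
        then have z: "\<And>u. u \<in> M.Orb x \<Longrightarrow> M.P u u = 0" using M.P_nn[OF x] by force
        have "det_2cycle_on M.P (M.Orb x)"
          unfolding det_2cycle_on_def
        proof (intro conjI ballI c2)
          fix a b assume a: "a \<in> M.Orb x" and b: "b \<in> M.Orb x"
          show "M.P a b = (if a = b then 0 else 1)"
          proof (cases "a = b")
            case False
            have "M.Orb x = {a, b}" by (rule two_elems[OF M.finO[OF x] c2 a b False])
            then have "M.P a a + M.P a b = 1" using M.P_row[OF x a] False by simp
            then show ?thesis using z[OF a] False by simp
          qed (use z a in simp)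
        qed
        then show False using nd x unfolding mh_orbit_kernel_def by blast
      qed
    qed
    show "(\<lambda>i. kernel_pow X (mh_orbit_kernel G \<phi> \<pi>) i x y) \<longlonglongrightarrow> gibbs_orbit_kernel G \<phi> \<pi> x y"
      unfolding mh_orbit_kernel_def by (rule M.conv[OF H x y])
  qed
next
  interpret B: okern G \<phi> X \<pi> "\<lambda>px py. py / (px + py)"
  proof (rule okern.intro)
    show "\<And>a b::real. 0 < a \<Longrightarrow> 0 < b \<Longrightarrow> 0 < b / (a + b)" by simp
    show "\<And>a b::real. 0 < a \<Longrightarrow> 0 < b \<Longrightarrow> b / (a + b) \<le> 1" by simp
    show "\<And>a b::real. 0 < a \<Longrightarrow> 0 < b \<Longrightarrow> a * (b / (a + b)) = b * (a / (b + a))"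
      by (simp add: field_simps)
  qed (use assms in auto)
  have H: "\<forall>x\<in>X. card (B.Orb x) = 2 \<longrightarrow> (\<exists>u\<in>B.Orb x. B.P u u > 0)"
  proof (intro ballI impI)
    fix x assume x: "x \<in> X" and c2: "card (B.Orb x) = 2"
    have xo: "x \<in> B.Orb x" using orb_self[OF assms(2) x] .
    obtain b where b: "b \<in> B.Orb x" "b \<noteq> x" using other_elem[OF B.finO[OF x] c2 xo] by blast
    have O: "B.Orb x = {x, b}" by (rule two_elems[OF B.finO[OF x] c2 xo b(1) b(2)[symmetric]])
    have "B.P x x = 1 - B.P x b" using B.P_diag[OF x xo] O b by simp
    also have "B.P x b = \<pi> b / (\<pi> x + \<pi> b)" using B.P_off[OF x xo b] c2 by simp
    finally have "B.P x x = 1 - \<pi> b / (\<pi> x + \<pi> b)" .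
    moreover have "\<pi> x > 0" "\<pi> b > 0" using assms(4) x B.inX[OF x b(1)] by auto
    then have "\<pi> b / (\<pi> x + \<pi> b) < 1" by simp
    ultimately have "B.P x x > 0" by linarith
    then show "\<exists>u\<in>B.Orb x. B.P u u > 0" using xo by blast
  qed
  show "\<forall>x\<in>X. \<forall>y\<in>X. (\<lambda>i. kernel_pow X (barker_orbit_kernel G \<phi> \<pi>) i x y)
              \<longlonglongrightarrow> gibbs_orbit_kernel G \<phi> \<pi> x y"
    unfolding barker_orbit_kernel_def using B.conv[OF H] by blast
qed

end
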